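(* Let $V$ be an $\hbar$-adic nonlocal vertex algebra and let $u,v\in V$, $c^{(r)}\in V$ ($r\in\mathbb N$) with $\lim_{r\to\infty}c^{(r)}=0$ $\hbar$-adically, and $\beta(x),f(x),g(x)\in\mathbb{C}((x))[[\hbar]]$, such that $$Y(u,x_1)Y(v,x_2)-\beta(x_2-x_1)Y(v,x_2)Y(u,x_1)=f(x_1-x_2)+g(x_2-x_1)+\sum_{r\ge0}Y(c^{(r)},x_2)\frac{1}{r!}\Big(\frac{\partial}{\partial x_2}\Big)^rx_1^{-1}\delta\Big(\frac{x_2}{x_1}\Big).$$ Then $$Y(u,x_1)Y(v,x_2)\sim\beta(x_2-x_1)Y(v,x_2)Y(u,x_1)+f(-x_2+x_1)+g(x_2-x_1)$$ and $$Y(u,x)^-v=f(x)^-{\bf 1}+\sum_{r\ge0}c^{(r)}x^{-r-1}.$$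
   Context: An $\hbar$-adic nonlocal vertex algebra is a topologically free $\mathbb{C}[[\hbar]]$-module $V$ (i.e. isomorphic to $V_0[[\hbar]]$) with ${\bf 1}\in V$ and a $\mathbb{C}[[\hbar]]$-linear $Y(\cdot,x):V\to(\mathrm{End}V)[[x^{\pm1}]]$, $Y(v,x)=\sum v_nx^{-n-1}$, such that reductions mod $\hbar^n$ of $Y(u,x)w$ lie in $(V/\hbar^nV)((x))$, $Y({\bf 1},x)=1$, $Y(v,x){\bf 1}\in V[[x]]$ with constant term $v$, and for $u,v,w$ and each $n\ge1$ there is $l$ with $(z+y)^lY(u,z+y)Y(v,y)w\equiv(z+y)^lY(Y(u,z)v,y)w$ mod $\hbar^nV[[z^{\pm1},y^{\pm1}]]$. Conventions: $\delta(x)=\sum_{n\in\mathbb Z}x^n$; a scalar series $h(x)$ placed in an operator identity means $h\cdot\mathrm{id}_V$; $f(x_1-x_2)$ is expanded in nonnegative powers of $x_2$, while $f(-x_2+x_1)$, $g(x_2-x_1)$ and $\beta(x_2-x_1)$ are expanded in nonnegative powers of $x_1$. For $F,G\in(\mathrm{End}V)[[x_1^{\pm1},x_2^{\pm1}]]$, $F\sim G$ means: for every $n\ge1$ there is $k\ge0$ with $(x_1-x_2)^kF\equiv(x_1-x_2)^kG$ modulo $\hbar^n(\mathrm{End}V)[[x_1^{\pm1},x_2^{\pm1}]]$. $Y(u,x)^-=\sum_{n\ge0}u_nx^{-n-1}$ and, for $f(x)=\sum_nf_nx^n\in\mathbb{C}((x))[[\hbar]]$, $f(x)^-=\sum_{n<0}f_nx^n$.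 *)

theory Defs
  imports Complex_Main "HOL-Computational_Algebra.Formal_Power_Series"
    "HOL-Library.Function_Algebras"
begin

text \<open>Model: V = V0[[h]] is represented by functions nat => 'v (coefficient of h^p),
  where V0 = 'v is a complex vector space with scalar multiplication sc.
  A series in C((x))[[h]] is represented by its x-coefficients int => complex fps.\<close>

type_synonym 'v hser = "nat \<Rightarrow> 'v"

definition cscale :: "(complex \<Rightarrow> 'v \<Rightarrow> 'v) \<Rightarrow> complex \<Rightarrow> 'v hser \<Rightarrow> 'v hser" where
  "cscale sc c w = (\<lambda>p. sc c (w p))"

definition hsmult :: "(complex \<Rightarrow> 'v::ab_group_add \<Rightarrow> 'v) \<Rightarrow> complex fps \<Rightarrow> 'v hser \<Rightarrow> 'v hser" where
  "hsmult sc a w = (\<lambda>p. \<Sum>q\<le>p. sc (fps_nth a q) (w (p - q)))"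

definition hcong :: "nat \<Rightarrow> 'v hser \<Rightarrow> 'v hser \<Rightarrow> bool" where
  "hcong n x y \<longleftrightarrow> (\<forall>p<n. x p = y p)"

text \<open>h-adically convergent sum of a family (for summable families, i.e. each
  h-coefficient has finitely many nonzero contributions).\<close>
definition hsum :: "('i \<Rightarrow> 'v::comm_monoid_add hser) \<Rightarrow> 'v hser" where
  "hsum F = (\<lambda>p. \<Sum>i\<in>{i. F i p \<noteq> 0}. F i p)"

definition hlinear :: "(complex \<Rightarrow> 'v::ab_group_add \<Rightarrow> 'v) \<Rightarrow> ('v hser \<Rightarrow> 'v hser) \<Rightarrow> bool" where
  "hlinear sc \<phi> \<longleftrightarrow> (\<forall>x y. \<phi> (x + y) = \<phi> x + \<phi> y) \<and> (\<forall>a x. \<phi> (hsmult sc a x) = hsmult sc a (\<phi> x))"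

text \<open>Elements of C((x))[[h]]: every h-coefficient is a Laurent series in x.\<close>
definition hlaurent :: "(int \<Rightarrow> complex fps) \<Rightarrow> bool" where
  "hlaurent f \<longleftrightarrow> (\<forall>p. \<exists>N. \<forall>n<N. fps_nth (f n) p = 0)"

text \<open>h-adic nonlocal vertex algebra structure; Y v m = v_m.\<close>
definition hnva :: "(complex \<Rightarrow> 'v::ab_group_add \<Rightarrow> 'v) \<Rightarrow> 'v hser \<Rightarrow>
    ('v hser \<Rightarrow> int \<Rightarrow> 'v hser \<Rightarrow> 'v hser) \<Rightarrow> bool" where
  "hnva sc vac Y \<longleftrightarrow>
     vector_space sc \<and>
     (\<forall>v m. hlinear sc (Y v m)) \<and> (\<forall>m w. hlinear sc (\<lambda>v. Y v m w)) \<and>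
     (\<forall>u w n. \<exists>M. \<forall>m\<ge>M. hcong n (Y u m w) 0) \<and>
     (\<forall>m w. Y vac m w = (if m = -1 then w else 0)) \<and>
     (\<forall>v. (\<forall>m\<ge>0. Y v m vac = 0) \<and> Y v (-1) vac = v) \<and>
     (\<forall>u v w n. n \<ge> 1 \<longrightarrow> (\<exists>l::nat. \<forall>a b::int.
        hcong n
          (\<Sum>i\<le>l. cscale sc (of_nat (l choose i))
              (hsum (\<lambda>j::nat. cscale sc ((of_int (a - int i + int j)) gchoose j)
                  (Y u (- (a - int i) - 1 - int j) (Y v (int j - (b - int (l - i)) - 1) w)))))
          (\<Sum>i\<le>l. cscale sc (of_nat (l choose i))
              (Y (Y u (- (a - int i) - 1) v) (- (b - int (l - i)) - 1) w))))"

text \<open>Coefficient of x1^a x2^b of f(x1-x2) (expanded in nonnegative powers of x2).\<close>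
definition ser_12 :: "(int \<Rightarrow> complex fps) \<Rightarrow> int \<Rightarrow> int \<Rightarrow> complex fps" where
  "ser_12 f a b = (if b \<ge> 0 then fps_const ((-1) ^ nat b * ((of_int (a + b)) gchoose nat b)) * f (a + b) else 0)"

text \<open>Coefficient of x1^a x2^b of g(x2-x1) (expanded in nonnegative powers of x1).\<close>
definition ser_21 :: "(int \<Rightarrow> complex fps) \<Rightarrow> int \<Rightarrow> int \<Rightarrow> complex fps" where
  "ser_21 g a b = (if a \<ge> 0 then fps_const ((-1) ^ nat a * ((of_int (a + b)) gchoose nat a)) * g (a + b) else 0)"

text \<open>Coefficient of x1^a x2^b of f(-x2+x1) (expanded in nonnegative powers of x1).\<close>
definition ser_m21 :: "(int \<Rightarrow> complex fps) \<Rightarrow> int \<Rightarrow> int \<Rightarrow> complex fps" where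
  "ser_m21 f a b = (if a \<ge> 0 then fps_const ((-1) ^ nat \<bar>b\<bar> * ((of_int (a + b)) gchoose nat a)) * f (a + b) else 0)"

text \<open>Coefficient of x1^a x2^b of beta(x2-x1) Y(v,x2) Y(u,x1) w.\<close>
definition beta_prod :: "(complex \<Rightarrow> 'v::ab_group_add \<Rightarrow> 'v) \<Rightarrow> ('v hser \<Rightarrow> int \<Rightarrow> 'v hser \<Rightarrow> 'v hser) \<Rightarrow>
    (int \<Rightarrow> complex fps) \<Rightarrow> 'v hser \<Rightarrow> 'v hser \<Rightarrow> 'v hser \<Rightarrow> int \<Rightarrow> int \<Rightarrow> 'v hser" where
  "beta_prod sc Y \<beta> u v w a b =
     hsum (\<lambda>(j::nat, c::int). hsmult sc (ser_21 \<beta> (int j) c)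
        (Y v (- (b - c) - 1) (Y u (- (a - int j) - 1) w)))"

text \<open>Coefficient of x1^a x2^b of sum_r Y(c^(r),x2) (1/r!) (d/dx2)^r x1^-1 delta(x2/x1), applied to w.\<close>
definition delta_term :: "(complex \<Rightarrow> 'v::ab_group_add \<Rightarrow> 'v) \<Rightarrow> ('v hser \<Rightarrow> int \<Rightarrow> 'v hser \<Rightarrow> 'v hser) \<Rightarrow>
    (nat \<Rightarrow> 'v hser) \<Rightarrow> 'v hser \<Rightarrow> int \<Rightarrow> int \<Rightarrow> 'v hser" where
  "delta_term sc Y c w a b =
     hsum (\<lambda>r::nat. cscale sc ((of_int (- a - 1)) gchoose r) (Y (c r) (- a - b - int r - 2) w))"

text \<open>Coefficient of x1^a x2^b of (x1-x2)^k F.\<close>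
definition mul_diff :: "(complex \<Rightarrow> 'v::ab_group_add \<Rightarrow> 'v) \<Rightarrow> nat \<Rightarrow> (int \<Rightarrow> int \<Rightarrow> 'v hser) \<Rightarrow> int \<Rightarrow> int \<Rightarrow> 'v hser" where
  "mul_diff sc k F a b = (\<Sum>i\<le>k. cscale sc (of_nat (k choose i) * (-1) ^ (k - i)) (F (a - int i) (b - int (k - i))))"

end

theory Submission imports Defs "HOL-Library.Function_Algebras" begin

definition altE :: "nat \<Rightarrow> (nat \<Rightarrow> complex) \<Rightarrow> complex" where
  "altE k F = (\<Sum>i\<le>k. (-1)^i * of_nat (k choose i) * F i)"

lemma altE_Suc: "altE (Suc k) F = altE k F - altE k (\<lambda>i. F (Suc i))"
proof -
  have A: "altE (Suc k) F = F 0 - (\<Sum>i\<le>k. (-1)^i * of_nat (k choose i) * F (Suc i))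
       - (\<Sum>i\<le>k. (-1)^i * of_nat (k choose Suc i) * F (Suc i))"
    unfolding altE_def sum.atMost_Suc_shift
    by (simp add: algebra_simps sum.distrib sum_subtractf sum_negf)
  have B: "altE k F = F 0 - (\<Sum>i\<le>k. (-1)^i * of_nat (k choose Suc i) * F (Suc i))"
  proof (cases k)
    case 0 then show ?thesis by (simp add: altE_def)
  next
    case (Suc m)
    have "altE k F = F 0 + (\<Sum>i\<le>m. (-1)^Suc i * of_nat (k choose Suc i) * F (Suc i))"
      unfolding altE_def Suc sum.atMost_Suc_shift by simp
    also have "(\<Sum>i\<le>m. (-1)^Suc i * of_nat (k choose Suc i) * F (Suc i)) =
       (\<Sum>i\<le>k. (-1)^Suc i * of_nat (k choose Suc i) * F (Suc i))"
      unfolding Suc by (simp add: sum.atMost_Suc binomial_eq_0)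
    finally show ?thesis by (simp add: sum_negf)
  qed
  show ?thesis using A B by (simp add: altE_def)
qed

lemma altE_diff: "altE k F - altE k G = altE k (\<lambda>i. F i - G i)"
  unfolding altE_def by (simp add: sum_subtractf algebra_simps)

lemma altE_gchoose: "r < k \<Longrightarrow> altE k (\<lambda>i. (x + of_nat i) gchoose r) = 0"
proof (induction k arbitrary: r x)
  case 0 then show ?case by simp
next
  case (Suc k)
  show ?case
  proof (cases r)
    case 0 then show ?thesis by (simp add: altE_Suc)
  next
    case (Suc r')
    have "altE (Suc k) (\<lambda>i. (x + of_nat i) gchoose r) =
        - altE k (\<lambda>i. ((x + of_nat (Suc i)) gchoose r) - ((x + of_nat i) gchoose r))"
      unfolding altE_Suc by (metis altE_diff minus_diff_eq)
    also have "(\<lambda>i. ((x + of_nat (Suc i)) gchoose r) - ((x + of_nat i) gchoose r)) = (\<lambda>i. (x + of_nat i) gchoose r')"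
    proof
      fix i
      show "((x + of_nat (Suc i)) gchoose r) - ((x + of_nat i) gchoose r) = ((x + of_nat i) gchoose r')"
        using gbinomial_Suc_Suc[of "x + of_nat i" r'] Suc by (simp add: algebra_simps)
    qed
    also have "altE k (\<lambda>i. (x + of_nat i) gchoose r') = 0" using Suc.IH[of r'] Suc.prems Suc by simp
    finally show ?thesis by simp
  qed
qed

lemma sgn_split: "i \<le> k \<Longrightarrow> (-1::complex)^(k-i) = (-1)^k * (-1)^i"
proof -
  assume "i \<le> k"
  then have "(-1::complex)^k = (-1)^(k-i) * (-1)^i" by (metis le_add_diff_inverse2 power_add)
  then have "(-1::complex)^k * (-1)^i = (-1)^(k-i) * ((-1)^i * (-1)^i)" by simp
  also have "(-1::complex)^i * (-1)^i = 1" by (metis power_add power_minus1_even mult_2)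
  finally show ?thesis by simp
qed

lemma fin_diff_zero:
  assumes "r < k"
  shows "(\<Sum>i\<le>k. of_nat (k choose i) * (-1)^(k-i) * ((x + of_nat i) gchoose r)) = (0::complex)"
proof -
  have "(\<Sum>i\<le>k. of_nat (k choose i) * (-1)^(k-i) * ((x + of_nat i) gchoose r)) =
     (-1)^k * altE k (\<lambda>i. (x + of_nat i) gchoose r)"
    unfolding altE_def sum_distrib_left by (rule sum.cong) (auto simp: sgn_split)
  then show ?thesis using altE_gchoose[OF assms] by simp
qed


lemma vand_lemma:
  fixes M :: complex and t :: int
  shows "(\<Sum>i\<le>k. of_nat (k choose i) * (if t - int i \<ge> 0 then M gchoose nat (t - int i) else 0))
       = (if t \<ge> 0 then (of_nat k + M) gchoose nat t else 0)"
proof (cases "t \<ge> 0")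
  case False then show ?thesis by (intro trans[OF sum.neutral]) auto
next
  case True
  define T where "T = nat t"
  have tT: "t = int T" using True T_def by simp
  have "(\<Sum>i\<le>k. of_nat (k choose i) * (if t - int i \<ge> 0 then M gchoose nat (t - int i) else 0))
     = (\<Sum>i\<le>k + T. of_nat (k choose i) * (if i \<le> T then M gchoose (T - i) else 0))"
    by (rule sum.mono_neutral_cong_left) (auto simp: tT binomial_eq_0 nat_diff_distrib)
  also have "\<dots> = (\<Sum>i\<le>T. of_nat (k choose i) * (M gchoose (T - i)))"
    by (rule sum.mono_neutral_cong_right) (auto simp: binomial_eq_0)
  also have "\<dots> = (\<Sum>i\<in>{0..T}. (of_nat k gchoose i) * (M gchoose (T - i)))"
    by (simp add: binomial_gbinomial atMost_atLeast0)
  also have "\<dots> = (of_nat k + M) gchoose T" by (rule gbinomial_Vandermonde)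
  finally show ?thesis using True T_def by simp
qed

lemma sign_lemma:
  assumes "i \<le> k"
  shows "(-1::complex)^(k-i) * (-1)^nat \<bar>b - int (k-i)\<bar> = (-1)^nat \<bar>b\<bar>"
proof -
  have ev_abs: "\<And>z::int. even (nat \<bar>z\<bar>) = even z"
    by (simp add: even_nat_iff)
  have "\<And>j. even (j + nat \<bar>b - int j\<bar>) = even (nat \<bar>b\<bar>)"
    by (simp add: ev_abs even_add even_nat_iff) blast
  then have "even (k - i + nat \<bar>b - int (k-i)\<bar>) \<longleftrightarrow> even (nat \<bar>b\<bar>)" .
  then show ?thesis by (simp add: power_add[symmetric] minus_one_power_iff)
qed

lemma comb_B:
  fixes a b :: int and k :: nat
  assumes ab: "0 \<le> a + b"
  shows "(\<Sum>i\<le>k. (of_nat (k choose i) * (-1)^(k-i)) * (if b - int(k-i) \<ge> 0 then (-1)^nat(b - int(k-i)) * (of_int(a - int i + (b - int(k-i))) gchoose nat(b - int(k-i))) else (0::complex)))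
   = (\<Sum>i\<le>k. (of_nat (k choose i) * (-1)^(k-i)) * (if a - int i \<ge> 0 then (-1)^nat \<bar>b - int(k-i)\<bar> * (of_int(a - int i + (b - int(k-i))) gchoose nat(a - int i)) else 0))"
proof -
  define M :: complex where "M = of_int (a + b - int k)"
  have L: "(\<Sum>i\<le>k. (of_nat (k choose i) * (-1)^(k-i)) * (if b - int(k-i) \<ge> 0 then (-1)^nat(b - int(k-i)) * (of_int(a - int i + (b - int(k-i))) gchoose nat(b - int(k-i))) else (0::complex)))
     = (-1)^nat \<bar>b\<bar> * (\<Sum>i\<le>k. of_nat (k choose (k - i)) * (if b - int(k-i) \<ge> 0 then M gchoose nat(b - int(k-i)) else 0))"
    unfolding sum_distrib_left
  proof (rule sum.cong[OF refl])
    fix i assume "i \<in> {..k}"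
    then have ik: "i \<le> k" by simp
    have e: "a - int i + (b - int(k-i)) = a + b - int k" using ik by simp
    show "(of_nat (k choose i) * (-1)^(k-i)) * (if b - int(k-i) \<ge> 0 then (-1)^nat(b - int(k-i)) * (of_int(a - int i + (b - int(k-i))) gchoose nat(b - int(k-i))) else (0::complex))
      = (-1)^nat \<bar>b\<bar> * (of_nat (k choose (k - i)) * (if b - int(k-i) \<ge> 0 then M gchoose nat(b - int(k-i)) else 0))"
    proof (cases "b - int(k-i) \<ge> 0")
      case True
      then have "nat(b - int(k-i)) = nat \<bar>b - int(k-i)\<bar>" by simp
      have bnn: "b \<ge> 0" using True by simp
      have s: "(-1::complex)^(k-i) * (-1)^nat(b - int(k-i)) = (-1)^nat b"
        using sign_lemma[OF ik, of b] True bnn by (simp only: abs_of_nonneg)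
      have c: "k choose (k - i) = k choose i" using binomial_symmetric[OF ik] by metis
      have "(of_nat (k choose i) * (-1)^(k-i)) * ((-1)^nat(b - int(k-i)) * (of_int(a + b - int k) gchoose nat(b - int(k-i))))
         = ((-1::complex)^(k-i) * (-1)^nat(b - int(k-i))) * (of_nat (k choose i) * (of_int(a + b - int k) gchoose nat(b - int(k-i))))"
        by (simp only: mult_ac)
      then show ?thesis unfolding c e M_def s using True bnn by simp
    qed simp
  qed
  also have "(\<Sum>i\<le>k. of_nat (k choose (k - i)) * (if b - int(k-i) \<ge> 0 then M gchoose nat(b - int(k-i)) else 0))
     = (\<Sum>i\<le>k. of_nat (k choose i) * (if b - int i \<ge> 0 then M gchoose nat(b - int i) else 0))"
    using sum.atLeastAtMost_rev[of "\<lambda>i. of_nat (k choose i) * (if b - int i \<ge> 0 then M gchoose nat(b - int i) else 0)" 0 k]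
    by (simp only: atMost_atLeast0 add_0_left add_0_right)
  also have "\<dots> = (if b \<ge> 0 then (of_nat k + M) gchoose nat b else 0)" by (rule vand_lemma)
  finally have L': "(\<Sum>i\<le>k. (of_nat (k choose i) * (-1)^(k-i)) * (if b - int(k-i) \<ge> 0 then (-1)^nat(b - int(k-i)) * (of_int(a - int i + (b - int(k-i))) gchoose nat(b - int(k-i))) else (0::complex)))
     = (-1)^nat \<bar>b\<bar> * (if b \<ge> 0 then (of_nat k + M) gchoose nat b else 0)" .
  have R: "(\<Sum>i\<le>k. (of_nat (k choose i) * (-1)^(k-i)) * (if a - int i \<ge> 0 then (-1)^nat \<bar>b - int(k-i)\<bar> * (of_int(a - int i + (b - int(k-i))) gchoose nat(a - int i)) else 0))
     = (-1)^nat \<bar>b\<bar> * (\<Sum>i\<le>k. of_nat (k choose i) * (if a - int i \<ge> 0 then M gchoose nat(a - int i) else 0))"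
    unfolding sum_distrib_left
  proof (rule sum.cong[OF refl])
    fix i assume "i \<in> {..k}"
    then have ik: "i \<le> k" by simp
    have e: "a - int i + (b - int(k-i)) = a + b - int k" using ik by simp
    show "(of_nat (k choose i) * (-1)^(k-i)) * (if a - int i \<ge> 0 then (-1)^nat \<bar>b - int(k-i)\<bar> * (of_int(a - int i + (b - int(k-i))) gchoose nat(a - int i)) else 0)
      = (-1)^nat \<bar>b\<bar> * (of_nat (k choose i) * (if a - int i \<ge> 0 then M gchoose nat(a - int i) else (0::complex)))"
      unfolding e M_def by (simp add: sign_lemma[OF ik, of b, symmetric] mult_ac)
  qed
  also have "\<dots> = (-1)^nat \<bar>b\<bar> * (if a \<ge> 0 then (of_nat k + M) gchoose nat a else 0)" using vand_lemma[of k a M] by simp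
  finally have R': "(\<Sum>i\<le>k. (of_nat (k choose i) * (-1)^(k-i)) * (if a - int i \<ge> 0 then (-1)^nat \<bar>b - int(k-i)\<bar> * (of_int(a - int i + (b - int(k-i))) gchoose nat(a - int i)) else 0))
     = (-1)^nat \<bar>b\<bar> * (if a \<ge> 0 then (of_nat k + M) gchoose nat a else 0)" .
  define N where "N = nat (a + b)"
  have kM: "of_nat k + M = of_nat N" using ab by (simp add: M_def N_def)
  have "(if b \<ge> 0 then (of_nat k + M) gchoose nat b else 0) = (if a \<ge> 0 then (of_nat k + M) gchoose nat a else (0::complex))"
    unfolding kM binomial_gbinomial[symmetric]
  proof -
    show "(if b \<ge> 0 then of_nat (N choose nat b) else 0) = (if a \<ge> 0 then of_nat (N choose nat a) else (0::complex))"
    proof (cases "a \<ge> 0 \<and> b \<ge> 0")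
      case True
      then have "nat a \<le> N" "N - nat a = nat b" using N_def by auto
      then show ?thesis using True binomial_symmetric[of "nat a" N] by simp
    next
      case False
      then show ?thesis using ab N_def by (auto simp: binomial_eq_0)
    qed
  qed
  then show ?thesis using L' R' by simp
qed


lemma sum_fun_app: "(\<Sum>i\<in>A. F i) x = (\<Sum>i\<in>A. F i x)"
  by (induct A rule: infinite_finite_induct) auto

lemma hlinear_zero: "hlinear sc \<phi> \<Longrightarrow> \<phi> 0 = 0"
  unfolding hlinear_def by (metis add_cancel_right_left add_0)

locale cmod =
  fixes sc :: "complex \<Rightarrow> 'v::ab_group_add \<Rightarrow> 'v"
  assumes md: "module sc"

sublocale cmod \<subseteq> module sc by (rule md)

context cmod
begin

lemma hsmult_zero_right: "hsmult sc a 0 = 0"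
  unfolding hsmult_def by (rule ext) simp

lemma hsmult_zero_left: "hsmult sc 0 w = 0"
  unfolding hsmult_def by (rule ext) simp

lemma hsmult_Xpow: "hsmult sc (fps_X ^ n) z = (\<lambda>p. if n \<le> p then z (p - n) else 0)"
proof (rule ext)
  fix p
  have "hsmult sc (fps_X ^ n) z p = (\<Sum>q\<le>p. (if q = n then z (p - q) else 0))"
    unfolding hsmult_def by (rule sum.cong) auto
  also have "\<dots> = (if n \<le> p then z (p - n) else 0)" by (simp add: sum.delta)
  finally show "hsmult sc (fps_X ^ n) z p = (if n \<le> p then z (p - n) else 0)" .
qed

lemma kill:
  assumes lin: "hlinear sc \<phi>" and x: "hcong n x 0"
  shows "hcong n (\<phi> x) 0"
proof -
  have "x = hsmult sc (fps_X ^ n) (\<lambda>p. x (p + n))"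
    unfolding hsmult_Xpow using x by (auto simp: hcong_def)
  then have "\<phi> x = hsmult sc (fps_X ^ n) (\<phi> (\<lambda>p. x (p + n)))"
    using lin unfolding hlinear_def by metis
  then show ?thesis unfolding hsmult_Xpow hcong_def by simp
qed

lemma swap_scale:
  assumes "finite A" "finite B"
  shows "(\<Sum>i\<in>A. sc (c i) (\<Sum>q\<in>B. sc (s i q) (W q))) = (\<Sum>q\<in>B. sc (\<Sum>i\<in>A. c i * s i q) (W q))"
proof -
  have "(\<Sum>i\<in>A. sc (c i) (\<Sum>q\<in>B. sc (s i q) (W q))) = (\<Sum>i\<in>A. \<Sum>q\<in>B. sc (c i * s i q) (W q))"
    by (simp add: scale_sum_right)
  also have "\<dots> = (\<Sum>q\<in>B. \<Sum>i\<in>A. sc (c i * s i q) (W q))" by (rule sum.swap)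
  also have "\<dots> = (\<Sum>q\<in>B. sc (\<Sum>i\<in>A. c i * s i q) (W q))" by (simp add: scale_sum_left)
  finally show ?thesis .
qed

end

lemma hsum_fin:
  assumes "finite S" "\<And>r. r \<notin> S \<Longrightarrow> F r p = 0"
  shows "hsum F p = (\<Sum>r\<in>S. F r p)"
proof -
  have "(\<Sum>r\<in>S. F r p) = (\<Sum>r\<in>{r. F r p \<noteq> 0}. F r p)"
    by (rule sum.mono_neutral_right) (use assms in auto)
  then show ?thesis unfolding hsum_def by simp
qed

lemma ser12_nth: "fps_nth (ser_12 f a b) q = (if b \<ge> 0 then (-1)^nat b * (of_int (a + b) gchoose nat b) else 0) * fps_nth (f (a + b)) q"
  unfolding ser_12_def by simp

lemma serm21_nth: "fps_nth (ser_m21 f a b) q = (if a \<ge> 0 then (-1)^nat \<bar>b\<bar> * (of_int (a + b) gchoose nat a) else 0) * fps_nth (f (a + b)) q"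
  unfolding ser_m21_def by simp

lemma mul_diff_app: "mul_diff sc k F a b p = (\<Sum>i\<le>k. sc (of_nat (k choose i) * (-1)^(k-i)) (F (a - int i) (b - int (k - i)) p))"
  unfolding mul_diff_def cscale_def sum_fun_app ..

theorem lemma3p37:
  fixes sc :: "complex \<Rightarrow> 'v::ab_group_add \<Rightarrow> 'v"
    and vac u v :: "'v hser"
    and Y :: "'v hser \<Rightarrow> int \<Rightarrow> 'v hser \<Rightarrow> 'v hser"
    and c :: "nat \<Rightarrow> 'v hser"
    and \<beta> f g :: "int \<Rightarrow> complex fps"
  assumes hV: "hnva sc vac Y"
    and hc: "\<forall>n. \<exists>R. \<forall>r\<ge>R. hcong n (c r) 0"
    and h\<beta>: "hlaurent \<beta>" and hf: "hlaurent f" and hg: "hlaurent g"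
    and hcomm: "\<forall>w a b.
       Y u (- a - 1) (Y v (- b - 1) w) - beta_prod sc Y \<beta> u v w a b
       = hsmult sc (ser_12 f a b) w + hsmult sc (ser_21 g a b) w + delta_term sc Y c w a b"
  shows "(\<forall>n\<ge>1. \<exists>k::nat. \<forall>w a b.
            hcong n (mul_diff sc k (\<lambda>a b. Y u (- a - 1) (Y v (- b - 1) w)) a b)
                    (mul_diff sc k (\<lambda>a b. beta_prod sc Y \<beta> u v w a b
                        + hsmult sc (ser_m21 f a b) w + hsmult sc (ser_21 g a b) w) a b))
       \<and> (\<forall>r::nat. Y u (int r) v = hsmult sc (f (- int r - 1)) vac + c r)"
proof -
  have VS: "vector_space sc" and linL: "\<And>m w. hlinear sc (\<lambda>v. Y v m w)" and linR: "\<And>v m. hlinear sc (Y v m)"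
    and vac1: "\<And>v m. m \<ge> 0 \<Longrightarrow> Y v m vac = 0" and vac2: "\<And>v. Y v (-1) vac = v"
    using hV unfolding hnva_def by auto
  interpret cmod sc
    using VS module_iff_vector_space cmod.intro by blast
  have Y0: "\<And>v m. Y v m 0 = 0" using linR hlinear_zero by blast
  have part2: "\<forall>r::nat. Y u (int r) v = hsmult sc (f (- int r - 1)) vac + c r"
  proof
    fix r :: nat
    define a where "a = - int r - 1"
    have E: "Y u (- a - 1) (Y v (- 0 - 1) vac) - beta_prod sc Y \<beta> u v vac a 0
       = hsmult sc (ser_12 f a 0) vac + hsmult sc (ser_21 g a 0) vac + delta_term sc Y c vac a 0"
      using hcomm by blast
    have E1: "Y u (- a - 1) (Y v (- 0 - 1) vac) = Y u (int r) v" using vac2 by (simp add: a_def)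
    have E2: "beta_prod sc Y \<beta> u v vac a 0 = 0"
    proof -
      have "(\<lambda>(j::nat, c::int). hsmult sc (ser_21 \<beta> (int j) c)
        (Y v (- (0 - c) - 1) (Y u (- (a - int j) - 1) vac))) = (\<lambda>_. 0)"
        using vac1 by (auto simp: a_def Y0 hsmult_zero_right)
      then show ?thesis unfolding beta_prod_def hsum_def by (simp add: zero_fun_def)
    qed
    have E3: "ser_12 f a 0 = f a" unfolding ser_12_def by simp
    have E4: "hsmult sc (ser_21 g a 0) vac = 0" unfolding ser_21_def a_def by (simp add: hsmult_zero_left)
    have E5: "delta_term sc Y c vac a 0 = c r"
    proof (rule ext)
      fix p
      let ?F = "\<lambda>r'::nat. cscale sc ((of_int (- a - 1)) gchoose r') (Y (c r') (- a - 0 - int r' - 2) vac)"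
      have z: "?F r' p = 0" if "r' \<noteq> r" for r'
      proof (cases "r' < r")
        case True
        then have "Y (c r') (- a - 0 - int r' - 2) vac = 0" using vac1 by (simp add: a_def)
        then show ?thesis by (simp add: cscale_def)
      next
        case False
        then have "r < r'" using that by simp
        then have "(of_int (- a - 1) :: complex) gchoose r' = 0"
          by (simp add: a_def binomial_gbinomial[symmetric] binomial_eq_0)
        then show ?thesis by (simp add: cscale_def)
      qed
      have "delta_term sc Y c vac a 0 p = (\<Sum>r'\<in>{r}. ?F r' p)"
        unfolding delta_term_def by (rule hsum_fin) (use z in auto)
      also have "\<dots> = c r p"
        using vac2 by (simp add: cscale_def a_def binomial_gbinomial[symmetric])
      finally show "delta_term sc Y c vac a 0 p = c r p" .
    qed
    show "Y u (int r) v = hsmult sc (f (- int r - 1)) vac + c r"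
      using E unfolding E1 E2 E3 E4 E5 by (simp add: a_def)
  qed
  have part1: "\<forall>n\<ge>1. \<exists>k::nat. \<forall>w a b.
            hcong n (mul_diff sc k (\<lambda>a b. Y u (- a - 1) (Y v (- b - 1) w)) a b)
                    (mul_diff sc k (\<lambda>a b. beta_prod sc Y \<beta> u v w a b
                        + hsmult sc (ser_m21 f a b) w + hsmult sc (ser_21 g a b) w) a b)"
  proof (intro allI impI)
    fix n :: nat assume "n \<ge> 1"
    obtain R where hR: "\<And>r. r \<ge> R \<Longrightarrow> hcong n (c r) 0" using hc by blast
    have "\<forall>p. \<exists>N. \<forall>m<N. fps_nth (f m) p = 0" using hf unfolding hlaurent_def by blast
    then obtain Nf where hNf: "\<And>p m. m < Nf p \<Longrightarrow> fps_nth (f m) p = 0" by metis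
    define k where "k = R + (\<Sum>q<n. nat (- Nf q))"
    have kR: "R \<le> k" unfolding k_def by simp
    have kN: "\<And>q. q < n \<Longrightarrow> - Nf q \<le> int k"
    proof -
      fix q assume "q < n"
      then have "nat (- Nf q) \<le> (\<Sum>q<n. nat (- Nf q))"
        by (intro member_le_sum) auto
      then show "- Nf q \<le> int k" unfolding k_def by linarith
    qed
    show "\<exists>k::nat. \<forall>w a b.
            hcong n (mul_diff sc k (\<lambda>a b. Y u (- a - 1) (Y v (- b - 1) w)) a b)
                    (mul_diff sc k (\<lambda>a b. beta_prod sc Y \<beta> u v w a b
                        + hsmult sc (ser_m21 f a b) w + hsmult sc (ser_21 g a b) w) a b)"
    proof (intro exI allI)
      fix w a b
      define C where "C = (\<lambda>i. of_nat (k choose i) * (-1::complex)^(k-i))"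
      define B where "B = (\<lambda>i. beta_prod sc Y \<beta> u v w (a - int i) (b - int (k - i)))"
      define F1 where "F1 = (\<lambda>i. hsmult sc (ser_12 f (a - int i) (b - int (k - i))) w)"
      define Fm where "Fm = (\<lambda>i. hsmult sc (ser_m21 f (a - int i) (b - int (k - i))) w)"
      define G where "G = (\<lambda>i. hsmult sc (ser_21 g (a - int i) (b - int (k - i))) w)"
      define D where "D = (\<lambda>i. delta_term sc Y c w (a - int i) (b - int (k - i)))"
      have UV: "\<And>a b. Y u (- a - 1) (Y v (- b - 1) w) = beta_prod sc Y \<beta> u v w a b +
          (hsmult sc (ser_12 f a b) w + hsmult sc (ser_21 g a b) w + delta_term sc Y c w a b)"
        using hcomm by (metis diff_eq_eq add.commute)
      show "hcong n (mul_diff sc k (\<lambda>a b. Y u (- a - 1) (Y v (- b - 1) w)) a b)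
                    (mul_diff sc k (\<lambda>a b. beta_prod sc Y \<beta> u v w a b
                        + hsmult sc (ser_m21 f a b) w + hsmult sc (ser_21 g a b) w) a b)"
        unfolding hcong_def
      proof (intro allI impI)
        fix p assume pn: "p < n"
        have Dz: "(\<Sum>i\<le>k. sc (C i) (D i p)) = 0"
        proof -
          define Z where "Z = (\<lambda>r::nat. Y (c r) (- a - b + int k - int r - 2) w)"
          have Zz: "\<And>r. r \<ge> R \<Longrightarrow> Z r p = 0"
          proof -
            fix r assume "r \<ge> R"
            then have "hcong n (Z r) 0" unfolding Z_def using kill[OF linL hR] by blast
            then show "Z r p = 0" using pn unfolding hcong_def by simp
          qed
          have Di: "D i p = (\<Sum>r<R. sc ((of_int (- a - 1) + of_nat i) gchoose r) (Z r p))" if "i \<le> k" for i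
          proof -
            have ex: "\<And>r::nat. - (a - int i) - (b - int (k - i)) - int r - 2 = - a - b + int k - int r - 2"
              using that by (simp add: of_nat_diff)
            have "D i p = (\<Sum>r<R. cscale sc ((of_int (- (a - int i) - 1)) gchoose r) (Z r) p)"
              unfolding D_def delta_term_def Z_def ex
              by (rule hsum_fin) (auto simp: cscale_def Zz[unfolded Z_def])
            moreover have eq: "(of_int (- (a - int i) - 1) :: complex) = of_int (- a - 1) + of_nat i" by simp
            ultimately show ?thesis by (simp only: cscale_def eq)
          qed
          have "(\<Sum>i\<le>k. sc (C i) (D i p)) = (\<Sum>i\<le>k. sc (C i) (\<Sum>r<R. sc ((of_int (- a - 1) + of_nat i) gchoose r) (Z r p)))"
            by (rule sum.cong) (auto simp: Di)
          also have "\<dots> = (\<Sum>r<R. sc (\<Sum>i\<le>k. C i * ((of_int (- a - 1) + of_nat i) gchoose r)) (Z r p))"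
            by (rule swap_scale) auto
          also have "\<dots> = 0"
          proof (rule sum.neutral, intro ballI)
            fix r assume "r \<in> {..<R}"
            then have "r < k" using kR by simp
            then have "(\<Sum>i\<le>k. C i * ((of_int (- a - 1) + of_nat i) gchoose r)) = 0"
              unfolding C_def using fin_diff_zero[of r k "of_int (- a - 1)"] by (simp add: mult.assoc)
            then show "sc (\<Sum>i\<le>k. C i * ((of_int (- a - 1) + of_nat i) gchoose r)) (Z r p) = 0" by simp
          qed
          finally show ?thesis .
        qed
        have Fe: "(\<Sum>i\<le>k. sc (C i) (F1 i p)) = (\<Sum>i\<le>k. sc (C i) (Fm i p))"
        proof -
          have "(\<Sum>i\<le>k. sc (C i) (F1 i p)) = (\<Sum>q\<le>p. sc (\<Sum>i\<le>k. C i * fps_nth (ser_12 f (a - int i) (b - int (k - i))) q) (w (p - q)))"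
            unfolding F1_def hsmult_def by (rule swap_scale) auto
          also have "\<dots> = (\<Sum>q\<le>p. sc (\<Sum>i\<le>k. C i * fps_nth (ser_m21 f (a - int i) (b - int (k - i))) q) (w (p - q)))"
          proof (rule sum.cong[OF refl])
            fix q assume "q \<in> {..p}"
            then have qn: "q < n" using pn by simp
            have fi: "\<And>i. i \<le> k \<Longrightarrow> a - int i + (b - int (k - i)) = a + b - int k" by (simp add: of_nat_diff)
            define phi where "phi = fps_nth (f (a + b - int k)) q"
            have L: "(\<Sum>i\<le>k. C i * fps_nth (ser_12 f (a - int i) (b - int (k - i))) q) =
              (\<Sum>i\<le>k. (of_nat (k choose i) * (-1)^(k-i)) * (if b - int(k-i) \<ge> 0 then (-1)^nat(b - int(k-i)) * (of_int(a - int i + (b - int(k-i))) gchoose nat(b - int(k-i))) else (0::complex))) * phi"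
              unfolding sum_distrib_right C_def phi_def ser12_nth
              by (rule sum.cong[OF refl]) (simp add: fi mult.assoc add_diff_eq)
            have R: "(\<Sum>i\<le>k. C i * fps_nth (ser_m21 f (a - int i) (b - int (k - i))) q) =
              (\<Sum>i\<le>k. (of_nat (k choose i) * (-1)^(k-i)) * (if a - int i \<ge> 0 then (-1)^nat \<bar>b - int(k-i)\<bar> * (of_int(a - int i + (b - int(k-i))) gchoose nat(a - int i)) else 0)) * phi"
              unfolding sum_distrib_right C_def phi_def serm21_nth
              by (rule sum.cong[OF refl]) (simp add: fi mult.assoc add_diff_eq)
            show "sc (\<Sum>i\<le>k. C i * fps_nth (ser_12 f (a - int i) (b - int (k - i))) q) (w (p - q)) =
                  sc (\<Sum>i\<le>k. C i * fps_nth (ser_m21 f (a - int i) (b - int (k - i))) q) (w (p - q))"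
            proof (cases "a + b \<ge> 0")
              case True
              show ?thesis unfolding L R comb_B[OF True] by (rule refl)
            next
              case False
              have "a + b - int k < Nf q" using kN[OF qn] False by linarith
              then have "phi = 0" unfolding phi_def by (rule hNf)
              then show ?thesis unfolding L R by simp
            qed
          qed
          also have "\<dots> = (\<Sum>i\<le>k. sc (C i) (Fm i p))"
            unfolding Fm_def hsmult_def by (rule swap_scale[symmetric]) auto
          finally show ?thesis .
        qed
        have "mul_diff sc k (\<lambda>a b. Y u (- a - 1) (Y v (- b - 1) w)) a b p =
            (\<Sum>i\<le>k. sc (C i) (B i p + (F1 i p + G i p + D i p)))"
          unfolding mul_diff_app UV C_def B_def F1_def G_def D_def by simp
        also have "\<dots> = (\<Sum>i\<le>k. sc (C i) (B i p)) + ((\<Sum>i\<le>k. sc (C i) (F1 i p)) + (\<Sum>i\<le>k. sc (C i) (G i p)) + (\<Sum>i\<le>k. sc (C i) (D i p)))"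
          by (simp add: scale_right_distrib sum.distrib)
        also have "\<dots> = (\<Sum>i\<le>k. sc (C i) (B i p)) + (\<Sum>i\<le>k. sc (C i) (Fm i p)) + (\<Sum>i\<le>k. sc (C i) (G i p))"
          unfolding Dz Fe by (simp add: add.assoc)
        also have "\<dots> = (\<Sum>i\<le>k. sc (C i) (B i p + Fm i p + G i p))"
          by (simp add: scale_right_distrib sum.distrib)
        also have "\<dots> = mul_diff sc k (\<lambda>a b. beta_prod sc Y \<beta> u v w a b
                        + hsmult sc (ser_m21 f a b) w + hsmult sc (ser_21 g a b) w) a b p"
          unfolding mul_diff_app C_def B_def Fm_def G_def by simp
        finally show "mul_diff sc k (\<lambda>a b. Y u (- a - 1) (Y v (- b - 1) w)) a b p =
            mul_diff sc k (\<lambda>a b. beta_prod sc Y \<beta> u v w a b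
                        + hsmult sc (ser_m21 f a b) w + hsmult sc (ser_21 g a b) w) a b p" .
      qed
    qed
  qed
  show ?thesis using part1 part2 by blast
qed
end
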